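(* Let $(X,T)$ be a dynamical system and $\mathcal{F}$ a family. (i) If $\mathcal{F}$ is free, then $\omega_{\mathcal{F}}(x)\subset\omega_T(x)$ for every $x\in X$. Moreover, if $(X,T)$ has a nonrecurrent point and $\omega_{\mathcal{F}}(x)\subset\omega_T(x)$ for every $x\in X$, then $\mathcal{F}$ is free. (ii) If $\mathcal{F}$ is free and has the finite intersection property, then it has the strong finite intersection property.
   Context: A dynamical system $(X,T)$: $X$ is a compact metric space with more than one point and without isolated points, $T:X\to X$ a continuous surjection. A family is a collection $\mathcal{F}$ of subsets of $\mathbb{Z}_+$ that is hereditary upward. $\mathcal{F}$ is free if the intersection of all its elements is empty. $\omega_{\mathcal{F}}(x)=\bigcap_{F\in\mathcal{F}}\overline{\{T^ix:i\in F\}}$; $\omega_T(x)=\bigcap_{n\ge1}\overline{\{T^kx:k\ge n\}}$. A point $x$ is recurrent if $x\in\omega_T(x)$. $\mathcal{F}$ has the finite intersection property if every finite subcollection has nonempty intersection, and the strong finite intersection property if every finite subcollection has infinite intersection. *)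

theory Defs
  imports "HOL-Analysis.Analysis"
begin

definition dynamical_system :: "'a::metric_space set \<Rightarrow> ('a \<Rightarrow> 'a) \<Rightarrow> bool" where
  "dynamical_system X T \<longleftrightarrow>
     compact X \<and> (\<exists>x\<in>X. \<exists>y\<in>X. x \<noteq> y) \<and> (\<forall>x\<in>X. x islimpt X) \<and>
     continuous_on X T \<and> T ` X = X"

text \<open>A family: a collection of subsets of Z+ (= nat) that is hereditary upward.\<close>
definition family :: "nat set set \<Rightarrow> bool" where
  "family \<F> \<longleftrightarrow> (\<forall>A B. A \<in> \<F> \<longrightarrow> A \<subseteq> B \<longrightarrow> B \<in> \<F>)"

definition free_family :: "nat set set \<Rightarrow> bool" where
  "free_family \<F> \<longleftrightarrow> \<Inter>\<F> = {}"

definition omega_fam :: "'a::metric_space set \<Rightarrow> ('a \<Rightarrow> 'a) \<Rightarrow> nat set set \<Rightarrow> 'a \<Rightarrow> 'a set" where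
  "omega_fam X T \<F> x = X \<inter> (\<Inter>F\<in>\<F>. closure {(T ^^ i) x | i. i \<in> F})"

definition omega_T :: "('a::metric_space \<Rightarrow> 'a) \<Rightarrow> 'a \<Rightarrow> 'a set" where
  "omega_T T x = (\<Inter>n\<in>{1..}. closure {(T ^^ k) x | k. k \<ge> n})"

definition recurrent :: "('a::metric_space \<Rightarrow> 'a) \<Rightarrow> 'a \<Rightarrow> bool" where
  "recurrent T x \<longleftrightarrow> x \<in> omega_T T x"

definition fip :: "nat set set \<Rightarrow> bool" where
  "fip \<F> \<longleftrightarrow> (\<forall>\<G>. \<G> \<subseteq> \<F> \<longrightarrow> finite \<G> \<longrightarrow> \<Inter>\<G> \<noteq> {})"

definition strong_fip :: "nat set set \<Rightarrow> bool" where
  "strong_fip \<F> \<longleftrightarrow> (\<forall>\<G>. \<G> \<subseteq> \<F> \<longrightarrow> finite \<G> \<longrightarrow> infinite (\<Inter>\<G>))"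

end

theory Submission
  imports Defs
begin

lemma periodic_iter:
  fixes T :: "'a \<Rightarrow> 'a"
  assumes "(T ^^ a) x = (T ^^ b) x" "a < b"
  shows "(T ^^ (a + m * (b - a))) x = (T ^^ a) x"
proof (induction m)
  case 0 then show ?case by simp
next
  case (Suc m)
  have e: "a + Suc m * (b - a) = (b - a) + (a + m * (b - a))" by simp
  have "(T ^^ (a + Suc m * (b - a))) x = (T ^^ (b - a)) ((T ^^ (a + m * (b - a))) x)"
    by (simp only: e funpow_add comp_apply)
  also have "\<dots> = (T ^^ (b - a)) ((T ^^ a) x)" using Suc by simp
  also have "\<dots> = (T ^^ ((b - a) + a)) x" by (simp only: funpow_add comp_apply)
  also have "\<dots> = (T ^^ b) x" using assms(2) by simp
  finally show ?case using assms(1) by simp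
qed

lemma part1:
  fixes T :: "'a::metric_space \<Rightarrow> 'a"
  assumes fam: "family \<F>" and free: "\<Inter>\<F> = {}"
    and y: "\<forall>F\<in>\<F>. y \<in> closure {(T ^^ i) x | i. i \<in> F}"
  shows "y \<in> omega_T T x"
  unfolding omega_T_def
proof (rule INT_I)
  fix n :: nat assume "n \<in> {1..}"
  define tl where "tl = {(T ^^ k) x | k. k \<ge> n}"
  show "y \<in> closure {(T ^^ k) x | k. k \<ge> n}"
  proof (rule ccontr)
    assume nt: "y \<notin> closure {(T ^^ k) x | k. k \<ge> n}"
    have A: "\<exists>j\<in>G. j < n \<and> y = (T ^^ j) x" if G: "G \<in> \<F>" for G
    proof -
      have "G \<union> {n..} \<in> \<F>" using fam G unfolding family_def by blast
      hence y1: "y \<in> closure {(T ^^ i) x | i. i \<in> G \<union> {n..}}" using y by blast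
      have eq: "{(T ^^ i) x | i. i \<in> G \<union> {n..}} = (\<lambda>i. (T ^^ i) x) ` {i\<in>G. i < n} \<union> tl"
        unfolding tl_def by (auto simp: not_le)
      have fin: "finite ((\<lambda>i. (T ^^ i) x) ` {i\<in>G. i < n})" by simp
      have "closure ((\<lambda>i. (T ^^ i) x) ` {i\<in>G. i < n}) = (\<lambda>i. (T ^^ i) x) ` {i\<in>G. i < n}"
        using fin by (simp add: closure_closed finite_imp_closed)
      hence "y \<in> (\<lambda>i. (T ^^ i) x) ` {i\<in>G. i < n} \<union> closure tl"
        using y1 unfolding eq closure_Un by simp
      thus ?thesis using nt unfolding tl_def by auto
    qed
    have "\<F> \<noteq> {}" using free by auto
    then obtain G where "G \<in> \<F>" by auto
    then obtain j where j: "j < n" "y = (T ^^ j) x" using A by blast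
    obtain G' where G': "G' \<in> \<F>" "j \<notin> G'" using free by blast
    then obtain j' where j': "j' \<in> G'" "j' < n" "y = (T ^^ j') x" using A by blast
    have ne: "j \<noteq> j'" using G' j' by auto
    define a where "a = min j j'"
    define b where "b = max j j'"
    have ab: "a < b" using ne unfolding a_def b_def by auto
    have jj: "(T ^^ j) x = (T ^^ j') x" using j(2) j'(3) by simp
    have eqab: "(T ^^ a) x = (T ^^ b) x"
    proof (cases "j \<le> j'")
      case True
      then have "a = j" "b = j'" unfolding a_def b_def by auto
      then show ?thesis using jj by simp
    next
      case False
      then have "a = j'" "b = j" unfolding a_def b_def by auto
      then show ?thesis using jj by simp
    qed
    have ya: "y = (T ^^ a) x" unfolding a_def by (metis j(2) j'(3) min_def)
    have "y = (T ^^ (a + n * (b - a))) x" using periodic_iter[OF eqab ab, of n] ya by simp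
    moreover have "a + n * (b - a) \<ge> n"
    proof -
      have "n * 1 \<le> n * (b - a)" using ab by (intro mult_le_mono2) simp
      hence "n \<le> n * (b - a)" by (simp only: mult_1_right)
      thus ?thesis by linarith
    qed
    ultimately have "y \<in> {(T ^^ k) x | k. k \<ge> n}" by blast
    hence "y \<in> closure {(T ^^ k) x | k. k \<ge> n}" by (rule subsetD[OF closure_subset])
    thus False using nt by contradiction
  qed
qed

lemma tail_shift:
  fixes T :: "'a \<Rightarrow> 'a"
  shows "{(T ^^ k) ((T ^^ i) z) | k. k \<ge> n} = {(T ^^ k) z | k. k \<ge> n + i}"
proof (intro set_eqI iffI)
  fix w assume "w \<in> {(T ^^ k) ((T ^^ i) z) | k. k \<ge> n}"
  then obtain k where "k \<ge> n" "w = (T ^^ (k + i)) z" by (auto simp: funpow_add)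
  thus "w \<in> {(T ^^ k) z | k. k \<ge> n + i}" by auto
next
  fix w assume "w \<in> {(T ^^ k) z | k. k \<ge> n + i}"
  then obtain k where k: "k \<ge> n + i" "w = (T ^^ k) z" by auto
  have e: "k = (k - i) + i" using k by simp
  have "w = (T ^^ (k - i)) ((T ^^ i) z)" using k(2) by (subst (asm) e) (simp only: funpow_add comp_apply)
  moreover have "n \<le> k - i" using k by simp
  ultimately show "w \<in> {(T ^^ k) ((T ^^ i) z) | k. k \<ge> n}" by blast
qed

lemma omega_shift:
  assumes "w \<in> omega_T T z"
  shows "w \<in> omega_T T ((T ^^ i) z)"
  using assms unfolding omega_T_def tail_shift by auto

lemma iter_surj:
  assumes "T ` X = X"
  shows "(T ^^ i) ` X = X"
proof (induction i)
  case 0 then show ?case by simp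
next
  case (Suc i)
  have "(T ^^ Suc i) ` X = T ` ((T ^^ i) ` X)" by (simp add: image_comp)
  then show ?case using Suc assms by simp
qed

lemma iter_in:
  assumes "T ` X = X" "z \<in> X"
  shows "(T ^^ i) z \<in> X"
  using iter_surj[OF assms(1), of i] assms(2) by blast

theorem proposition2p2:
  fixes X :: "'a::metric_space set" and T :: "'a \<Rightarrow> 'a" and \<F> :: "nat set set"
  assumes "dynamical_system X T" and "family \<F>"
  shows "(free_family \<F> \<longrightarrow> (\<forall>x\<in>X. omega_fam X T \<F> x \<subseteq> omega_T T x))
       \<and> (((\<exists>x\<in>X. \<not> recurrent T x) \<and> (\<forall>x\<in>X. omega_fam X T \<F> x \<subseteq> omega_T T x))
            \<longrightarrow> free_family \<F>)
       \<and> (free_family \<F> \<and> fip \<F> \<longrightarrow> strong_fip \<F>)"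
proof (intro conjI impI)
  assume "free_family \<F>"
  then show "\<forall>x\<in>X. omega_fam X T \<F> x \<subseteq> omega_T T x"
    using part1[OF assms(2)] unfolding free_family_def omega_fam_def by blast
next
  assume H: "(\<exists>x\<in>X. \<not> recurrent T x) \<and> (\<forall>x\<in>X. omega_fam X T \<F> x \<subseteq> omega_T T x)"
  have surj: "T ` X = X" using assms(1) unfolding dynamical_system_def by blast
  obtain x0 where x0: "x0 \<in> X" "x0 \<notin> omega_T T x0" using H unfolding recurrent_def by blast
  show "free_family \<F>" unfolding free_family_def
  proof (rule ccontr)
    assume "\<Inter>\<F> \<noteq> {}"
    then obtain i where i: "\<forall>F\<in>\<F>. i \<in> F" by auto
    obtain z where z: "z \<in> X" "(T ^^ i) z = x0"
      using iter_surj[OF surj, of i] x0(1) by (metis imageE)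
    have "x0 \<in> omega_fam X T \<F> z" unfolding omega_fam_def
    proof (intro IntI INT_I)
      show "x0 \<in> X" by fact
      fix F assume "F \<in> \<F>"
      hence "x0 \<in> {(T ^^ i) z | i. i \<in> F}" using i z by blast
      thus "x0 \<in> closure {(T ^^ i) z | i. i \<in> F}" by (rule subsetD[OF closure_subset])
    qed
    hence "x0 \<in> omega_T T z" using H z by blast
    hence "x0 \<in> omega_T T ((T ^^ i) z)" by (rule omega_shift)
    thus False using z x0 by simp
  qed
next
  assume H: "free_family \<F> \<and> fip \<F>"
  show "strong_fip \<F>" unfolding strong_fip_def
  proof (intro allI impI notI)
    fix G assume G: "G \<subseteq> \<F>" "finite G" and fin: "finite (\<Inter>G)"
    have "\<forall>s\<in>\<Inter>G. \<exists>F\<in>\<F>. s \<notin> F" using H unfolding free_family_def by blast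
    then obtain f where f: "\<forall>s\<in>\<Inter>G. f s \<in> \<F> \<and> s \<notin> f s" by metis
    define G' where "G' = G \<union> f ` (\<Inter>G)"
    have "G' \<subseteq> \<F>" "finite G'" using G f fin unfolding G'_def by auto
    moreover have "\<Inter>G' = {}"
    proof (rule equals0I)
      fix s assume s: "s \<in> \<Inter>G'"
      hence sG: "s \<in> \<Inter>G" unfolding G'_def by auto
      hence "f s \<in> G'" unfolding G'_def by auto
      with s have "s \<in> f s" by blast
      with f sG show False by blast
    qed
    ultimately show False using H unfolding fip_def by blast
  qed
qed

end
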